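(* Let $(\mathcal{S},\mathcal{A},P,R)$ be a finite Markov decision process with state space $\mathcal{S}=\{1,\dots,n\}$, finite action space $\mathcal{A}$, transition probabilities $P(s'\mid s,a)$ and reward $R(s,a,s')$, and let $\gamma\in[0,1)$. Define the Bellman operator $T:\mathbb{R}^n\to\mathbb{R}^n$ by $$(TV)(s)=\max_{a\in\mathcal{A}}\sum_{s'\in\mathcal{S}}P(s'\mid s,a)\big[R(s,a,s')+\gamma V(s')\big],$$ and let $V^*$ be the optimal value vector, i.e. the unique solution of $V^*=TV^*$. Fix $\epsilon>0$. Let $(s_k)_{k\ge 0}$ be a sequence of states (the state updated at iteration $k$) and consider the asynchronous noisy value iteration: for an arbitrary initial vector $\tilde V_0\in\mathbb{R}^n$, $$\tilde V_{k+1}(s)=\begin{cases}(T\tilde V_k)(s_k)+\tilde w_k, & s=s_k,\\ \tilde V_k(s), & s\neq s_k,\end{cases}$$ where the noise terms $\tilde w_k\in\mathbb{R}$ satisfy $|\tilde w_k|\le\epsilon$ for all $k$. Assume (a) every state is updated infinitely often, i.e. each $s\in\mathcal{S}$ equals $s_k$ for infinitely many $k$; and (b) there is a finite constant $M$ such that, defining $k_0=0$ and $k_{n+1}$ as the smallest index greater than $k_n$ such that every state of $\mathcal{S}$ is updated at least once at the iterations strictly after $k_n$ and up to $k_{n+1}$, one has $k_{n+1}-k_n\le M$ for all $n$. Then $$\limsup_{n\to\infty}\|V^*-\tilde V_{k_n}\|_\infty\le\frac{M\epsilon}{1-\gamma}.$$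
   Context: $\|\cdot\|_\infty$ denotes the maximum norm on $\mathbb{R}^n$. The noise $\tilde w_k$ models error introduced by computing the Bellman update homomorphically under an encryption scheme; it is only assumed to be bounded in absolute value by $\epsilon$ (it need not vanish). The noise may equivalently be thought of as entering inside the maximum, i.e. $\tilde V_{k+1}(s_k)=\max_a\big(\sum_{s'}P(s'\mid s_k,a)[R(s_k,a,s')+\gamma\tilde V_k(s')]+w_k(s_k,a)\big)$ with $|w_k(s_k,a)|\le\epsilon$, which yields an update of the stated form. *)

theory Defs
  imports "HOL-Analysis.Analysis"
begin

definition max_norm :: "('s::finite \<Rightarrow> real) \<Rightarrow> real" where
  "max_norm V = Max (range (\<lambda>s. \<bar>V s\<bar>))"

definition bellman ::
  "('s::finite \<Rightarrow> 'a::finite \<Rightarrow> 's \<Rightarrow> real) \<Rightarrow> ('s \<Rightarrow> 'a \<Rightarrow> 's \<Rightarrow> real) \<Rightarrow> real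
    \<Rightarrow> ('s \<Rightarrow> real) \<Rightarrow> 's \<Rightarrow> real" where
  "bellman P R g V s = Max (range (\<lambda>a. \<Sum>s'\<in>UNIV. P s a s' * (R s a s' + g * V s')))"

primrec epoch :: "(nat \<Rightarrow> 's) \<Rightarrow> nat \<Rightarrow> nat" where
  "epoch sq 0 = 0"
| "epoch sq (Suc n) =
     (LEAST m. epoch sq n < m \<and> (\<forall>x. \<exists>j. epoch sq n < j \<and> j \<le> m \<and> sq j = x))"

end

theory Submission
  imports Defs
begin

lemma abs_le_max_norm: "\<bar>V s\<bar> \<le> max_norm V"
  unfolding max_norm_def by (rule Max_ge) auto

lemma max_norm_le: "(\<And>s. \<bar>V s\<bar> \<le> D) \<Longrightarrow> max_norm V \<le> D"
  unfolding max_norm_def by (subst Max_le_iff) auto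

lemma bellman_lip:
  fixes P R :: "'s::finite \<Rightarrow> 'a::finite \<Rightarrow> 's \<Rightarrow> real"
  assumes P_nonneg: "\<And>s a s'. P s a s' \<ge> 0"
    and P_sum: "\<And>s a. (\<Sum>s'\<in>UNIV. P s a s') = 1"
    and g_ge: "0 \<le> g"
    and bnd: "\<And>s'. \<bar>V s' - U s'\<bar> \<le> D"
  shows "\<bar>bellman P R g V s - bellman P R g U s\<bar> \<le> g * D"
proof -
  have one: "Max (range (\<lambda>a. \<Sum>s'\<in>UNIV. P s a s' * (R s a s' + g * X s')))
      \<le> Max (range (\<lambda>a. \<Sum>s'\<in>UNIV. P s a s' * (R s a s' + g * Y s'))) + g * D"
    if b: "\<And>s'. \<bar>X s' - Y s'\<bar> \<le> D" for X Y :: "'s \<Rightarrow> real"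
  proof -
    let ?f = "\<lambda>a. \<Sum>s'\<in>UNIV. P s a s' * (R s a s' + g * X s')"
    let ?h = "\<lambda>a. \<Sum>s'\<in>UNIV. P s a s' * (R s a s' + g * Y s')"
    have "Max (range ?f) \<in> range ?f" by (rule Max_in) auto
    then obtain a where a: "Max (range ?f) = ?f a" by blast
    have "?f a - ?h a = (\<Sum>s'\<in>UNIV. P s a s' * (g * (X s' - Y s')))"
      by (simp add: sum_subtractf[symmetric] algebra_simps)
    also have "\<dots> \<le> (\<Sum>s'\<in>UNIV. P s a s' * (g * D))"
    proof (rule sum_mono)
      fix s' show "P s a s' * (g * (X s' - Y s')) \<le> P s a s' * (g * D)"
        using b[of s'] P_nonneg[of s a s'] g_ge
        by (intro mult_left_mono) (auto simp: abs_le_iff)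
    qed
    also have "\<dots> = g * D" using P_sum[of s a] by (simp add: sum_distrib_right[symmetric])
    finally have "?f a \<le> ?h a + g * D" by simp
    also have "?h a \<le> Max (range ?h)" by (rule Max_ge) auto
    finally show ?thesis using a by simp
  qed
  have "\<bar>U s' - V s'\<bar> \<le> D" for s' using bnd[of s'] by (simp add: abs_minus_commute)
  then have A: "bellman P R g U s \<le> bellman P R g V s + g * D"
    unfolding bellman_def by (rule one)
  have B: "bellman P R g V s \<le> bellman P R g U s + g * D"
    unfolding bellman_def by (rule one) (rule bnd)
  show ?thesis using A B by (simp add: abs_le_iff)
qed

lemma epoch_less:
  fixes sq :: "nat \<Rightarrow> 's::finite"
  assumes inf_often: "\<And>x. infinite {k. sq k = x}"
  shows "epoch sq n < epoch sq (Suc n)"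
proof -
  let ?e = "epoch sq n"
  have "\<exists>j. ?e < j \<and> sq j = x" for x
  proof -
    have "\<not> {k. sq k = x} \<subseteq> {..?e}" using inf_often[of x] finite_subset by blast
    then show ?thesis by (auto simp: not_le)
  qed
  then obtain J where J: "\<And>x. ?e < J x \<and> sq (J x) = x" by metis
  define m where "m = Max (range J)"
  have Jm: "J x \<le> m" for x unfolding m_def by (rule Max_ge) auto
  have e1: "?e < m" using J[of "sq 0"] Jm[of "sq 0"] by linarith
  have e2: "\<forall>x. \<exists>j. ?e < j \<and> j \<le> m \<and> sq j = x" using J Jm by blast
  have ex: "?e < m \<and> (\<forall>x. \<exists>j. ?e < j \<and> j \<le> m \<and> sq j = x)"
    using e1 e2 by blast
  show ?thesis using LeastI_ex[of "\<lambda>m. ?e < m \<and> (\<forall>x. \<exists>j. ?e < j \<and> j \<le> m \<and> sq j = x)"] ex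
    by auto
qed

theorem theorem2:
  fixes P R :: "'s::finite \<Rightarrow> 'a::finite \<Rightarrow> 's \<Rightarrow> real"
    and g \<epsilon> M :: real
    and Vstar :: "'s \<Rightarrow> real"
    and sq :: "nat \<Rightarrow> 's"
    and w :: "nat \<Rightarrow> real"
    and V :: "nat \<Rightarrow> 's \<Rightarrow> real"
  assumes P_nonneg: "\<And>s a s'. P s a s' \<ge> 0"
    and P_sum: "\<And>s a. (\<Sum>s'\<in>UNIV. P s a s') = 1"
    and g_ge: "0 \<le> g" and g_lt: "g < 1"
    and Vstar_fix: "bellman P R g Vstar = Vstar"
    and eps_pos: "\<epsilon> > 0"
    and noise: "\<And>k. \<bar>w k\<bar> \<le> \<epsilon>"
    and iter: "\<And>k. V (Suc k) = (V k)(sq k := bellman P R g (V k) (sq k) + w k)"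
    and inf_often: "\<And>x. infinite {k. sq k = x}"
    and gaps: "\<And>n. real (epoch sq (Suc n) - epoch sq n) \<le> M"
  shows "limsup (\<lambda>n. ereal (max_norm (\<lambda>s. Vstar s - V (epoch sq n) s)))
           \<le> ereal (M * \<epsilon> / (1 - g))"
proof -
  define L where "L = \<epsilon> / (1 - g)"
  have L_eq: "g * L + \<epsilon> = L" using g_lt unfolding L_def by (simp add: field_simps)
  have upd: "\<bar>Vstar (sq k) - V (Suc k) (sq k)\<bar> \<le> g * D + \<epsilon>"
    if "\<And>s. \<bar>Vstar s - V k s\<bar> \<le> D" for k D
  proof -
    have "\<bar>bellman P R g Vstar (sq k) - bellman P R g (V k) (sq k)\<bar> \<le> g * D"
      by (rule bellman_lip[OF P_nonneg P_sum g_ge that])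
    moreover have "Vstar (sq k) = bellman P R g Vstar (sq k)" using Vstar_fix by simp
    ultimately show ?thesis using noise[of k] iter[of k] by (simp add: abs_le_iff)
  qed
  define C0 where "C0 = max (max_norm (\<lambda>s. Vstar s - V 0 s)) L"
  have base: "\<forall>s. \<bar>Vstar s - V k s\<bar> \<le> C0" for k
  proof (induction k)
    case 0 then show ?case using abs_le_max_norm[of "\<lambda>s. Vstar s - V 0 s"] unfolding C0_def
      by (metis max.coboundedI1)
  next
    case (Suc k)
    have "L \<le> C0" unfolding C0_def by simp
    have "g * (C0 - L) \<le> 1 * (C0 - L)"
      by (rule mult_right_mono) (use g_lt \<open>L \<le> C0\<close> in auto)
    then have "g * C0 + \<epsilon> \<le> C0" using L_eq by (simp add: right_diff_distrib)
    then show ?case using upd[of k C0] Suc iter[of k] by auto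
  qed
  have step: "\<exists>K'. \<forall>k\<ge>K'. \<forall>s. \<bar>Vstar s - V k s\<bar> \<le> g * D + \<epsilon>"
    if H: "\<forall>k\<ge>K. \<forall>s. \<bar>Vstar s - V k s\<bar> \<le> D" for K D
  proof -
    have "\<exists>j. K \<le> j \<and> sq j = x" for x
    proof -
      have "\<not> {k. sq k = x} \<subseteq> {..<K}" using inf_often[of x] finite_subset by blast
      then show ?thesis by (auto simp: not_less)
    qed
    then obtain J where J: "\<And>x. K \<le> J x \<and> sq (J x) = x" by metis
    define K' where "K' = Suc (Max (range J))"
    have JK: "J x < K'" for x
    proof -
      have "J x \<le> Max (range J)" by (rule Max_ge) auto
      then show ?thesis unfolding K'_def by (rule le_imp_less_Suc)
    qed
    have pers: "\<bar>Vstar x - V (Suc (J x) + i) x\<bar> \<le> g * D + \<epsilon>" for x i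
    proof (induction i)
      case 0
      have "\<bar>Vstar (sq (J x)) - V (Suc (J x)) (sq (J x))\<bar> \<le> g * D + \<epsilon>"
        using upd[of "J x" D] H J[of x] by blast
      then show ?case using J[of x] by simp
    next
      case (Suc i)
      let ?k = "Suc (J x) + i"
      show ?case
      proof (cases "sq ?k = x")
        case True
        have "\<bar>Vstar (sq ?k) - V (Suc ?k) (sq ?k)\<bar> \<le> g * D + \<epsilon>"
          using upd[of ?k D] H J[of x] by simp
        then show ?thesis using True by simp
      next
        case False then show ?thesis using Suc iter[of ?k] by simp
      qed
    qed
    have "\<bar>Vstar s - V k s\<bar> \<le> g * D + \<epsilon>" if "k \<ge> K'" for k s
    proof -
      have "k = Suc (J s) + (k - Suc (J s))" using JK[of s] that by simp
      then show ?thesis using pers[of s "k - Suc (J s)"] by simp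
    qed
    then show ?thesis by blast
  qed
  define D :: "nat \<Rightarrow> real" where "D m = L + g ^ m * (C0 - L)" for m
  have Dsuc: "D (Suc m) = g * D m + \<epsilon>" for m
    unfolding D_def using L_eq by (simp add: algebra_simps)
  have Dm: "\<exists>K. \<forall>k\<ge>K. \<forall>s. \<bar>Vstar s - V k s\<bar> \<le> D m" for m
  proof (induction m)
    case 0 then show ?case using base unfolding D_def by auto
  next
    case (Suc m)
    then obtain K where "\<forall>k\<ge>K. \<forall>s. \<bar>Vstar s - V k s\<bar> \<le> D m" by blast
    from step[OF this] show ?case by (simp add: Dsuc)
  qed
  have mono_ep: "n \<le> epoch sq n" for n
  proof (induction n)
    case (Suc n) then show ?case using epoch_less[OF inf_often, of n] by simp
  qed simp
  have M1: "1 \<le> M" using gaps[of 0] epoch_less[OF inf_often, of 0] by simp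
  have LM: "L \<le> M * \<epsilon> / (1 - g)" unfolding L_def using M1 eps_pos g_lt
    by (simp add: divide_right_mono)
  have "limsup (\<lambda>n. ereal (max_norm (\<lambda>s. Vstar s - V (epoch sq n) s))) \<le> ereal L"
  proof (rule ereal_le_epsilon2)
    fix d :: real assume d: "0 < d"
    have "(\<lambda>m. g ^ m * (C0 - L)) \<longlonglongrightarrow> 0 * (C0 - L)"
      by (intro tendsto_mult LIMSEQ_power_zero tendsto_const) (use g_ge g_lt in auto)
    then have "eventually (\<lambda>m. g ^ m * (C0 - L) < d) sequentially"
      using d by (simp add: order_tendstoD(2))
    then obtain m where m: "g ^ m * (C0 - L) < d" using eventually_sequentially by auto
    obtain K where K: "\<forall>k\<ge>K. \<forall>s. \<bar>Vstar s - V k s\<bar> \<le> D m" using Dm by blast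
    have "eventually (\<lambda>n. ereal (max_norm (\<lambda>s. Vstar s - V (epoch sq n) s)) \<le> ereal L + ereal d) sequentially"
      unfolding eventually_sequentially
    proof (intro exI allI impI)
      fix n assume "K \<le> n"
      then have "K \<le> epoch sq n" using mono_ep[of n] by simp
      then have "max_norm (\<lambda>s. Vstar s - V (epoch sq n) s) \<le> D m" using K by (intro max_norm_le) auto
      then show "ereal (max_norm (\<lambda>s. Vstar s - V (epoch sq n) s)) \<le> ereal L + ereal d"
        using m unfolding D_def by simp
    qed
    then show "limsup (\<lambda>n. ereal (max_norm (\<lambda>s. Vstar s - V (epoch sq n) s))) \<le> ereal L + ereal d"
      by (rule Limsup_bounded)
  qed
  also have "\<dots> \<le> ereal (M * \<epsilon> / (1 - g))" using LM by simp
  finally show ?thesis .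
qed

end
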